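(* Let $k$ be a field of characteristic different from $2$. Among Lie algebras over $k$ of the form $\mathfrak{n}(S,E)$ with $(S,E)$ a finite simple graph and $\dim\mathfrak{n}(S,E)=6$, there are exactly five isomorphism classes.
   Context: A finite simple graph $(S,E)$ has finite vertex set $S$ and edge set $E$ consisting of unordered pairs $\alpha\beta$ of distinct vertices. Let $V$ be the $k$-vector space with basis $S$, and let $W\subseteq \bigwedge^2 V$ be the subspace spanned by all $\alpha\wedge\beta$ with $\alpha,\beta\in S$, $\alpha\neq\beta$ and $\alpha\beta\notin E$. The Lie algebra $\mathfrak{n}(S,E)$ is the vector space $V\oplus (\bigwedge^2V)/W$ with bracket determined by $[v_1,v_2]=v_1\wedge v_2 \bmod W$ for $v_1,v_2\in V$ and $[x,y]=0$ for $x\in\mathfrak{n}(S,E)$, $y\in(\bigwedge^2V)/W$. It has dimension $|S|+|E|$. *)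

theory Defs
  imports Main
begin

definition simple_graph :: "'a set \<Rightarrow> 'a set set \<Rightarrow> bool" where
  "simple_graph S E \<longleftrightarrow> finite S \<and>
     E \<subseteq> {{a, b} | a b. a \<in> S \<and> b \<in> S \<and> a \<noteq> b}"

(* Concrete model of n(S,E) = V \<oplus> (\<Lambda>^2 V)/W over the field 'k:
   V = functions S \<rightarrow> k (zero outside S);
   \<Lambda>^2 V = alternating "matrices" m (m a b = - m b a), with a\<wedge>b corresponding
   to the matrix with m a b = 1, m b a = -1; quotienting by W (spanned by a\<wedge>b for
   non-edges) amounts to keeping only the entries m a b with {a,b} \<in> E. *)
type_synonym ('a, 'k) nelem = "('a \<Rightarrow> 'k) \<times> ('a \<Rightarrow> 'a \<Rightarrow> 'k)"

definition ncarrier :: "'a set \<Rightarrow> 'a set set \<Rightarrow> ('a, 'k::field) nelem set" where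
  "ncarrier S E = {(v, m). (\<forall>a. a \<notin> S \<longrightarrow> v a = 0) \<and> (\<forall>a b. m a b = - m b a) \<and>
                            (\<forall>a b. {a, b} \<notin> E \<longrightarrow> m a b = 0)}"

definition nadd :: "('a, 'k::field) nelem \<Rightarrow> ('a, 'k) nelem \<Rightarrow> ('a, 'k) nelem" where
  "nadd x y = (\<lambda>a. fst x a + fst y a, \<lambda>a b. snd x a b + snd y a b)"

definition nsmul :: "'k::field \<Rightarrow> ('a, 'k) nelem \<Rightarrow> ('a, 'k) nelem" where
  "nsmul c x = (\<lambda>a. c * fst x a, \<lambda>a b. c * snd x a b)"

(* bracket: [v1 + m1, v2 + m2] = v1 \<wedge> v2 mod W *)
definition nbracket :: "'a set set \<Rightarrow> ('a, 'k::field) nelem \<Rightarrow> ('a, 'k) nelem \<Rightarrow> ('a, 'k) nelem" where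
  "nbracket E x y = (\<lambda>a. 0,
     \<lambda>a b. if {a, b} \<in> E then fst x a * fst y b - fst x b * fst y a else 0)"

definition lie_iso :: "'k::field itself \<Rightarrow> 'a set \<Rightarrow> 'a set set \<Rightarrow> 'a set \<Rightarrow> 'a set set \<Rightarrow> bool" where
  "lie_iso (TYPE('k)) S1 E1 S2 E2 \<longleftrightarrow>
     (\<exists>f :: ('a, 'k) nelem \<Rightarrow> ('a, 'k) nelem.
        bij_betw f (ncarrier S1 E1) (ncarrier S2 E2) \<and>
        (\<forall>x\<in>ncarrier S1 E1. \<forall>y\<in>ncarrier S1 E1. f (nadd x y) = nadd (f x) (f y)) \<and>
        (\<forall>c. \<forall>x\<in>ncarrier S1 E1. f (nsmul c x) = nsmul c (f x)) \<and>
        (\<forall>x\<in>ncarrier S1 E1. \<forall>y\<in>ncarrier S1 E1. f (nbracket E1 x y) = nbracket E2 (f x) (f y)))"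

(* finite simple graphs (vertices labelled by naturals; every finite graph is isomorphic
   to one of these) with dim n(S,E) = |S| + |E| = 6 *)
definition graphs6 :: "(nat set \<times> nat set set) set" where
  "graphs6 = {(S, E). simple_graph S E \<and> card S + card E = 6}"

end

theory Submission
  imports Defs
begin

definition zn :: "('a,'k::field) nelem" where "zn = (\<lambda>a. 0, \<lambda>a b. 0)"

lemma zn_in: "zn \<in> ncarrier S E" by (simp add: zn_def ncarrier_def)

lemma ncarrierI: "(\<And>a. a \<notin> S \<Longrightarrow> v a = 0) \<Longrightarrow> (\<And>a b. m a b = - m b a) \<Longrightarrow> (\<And>a b. {a,b} \<notin> E \<Longrightarrow> m a b = 0) \<Longrightarrow> (v, m) \<in> ncarrier S E"
  unfolding ncarrier_def by blast
lemma ncarrierD: assumes "x \<in> ncarrier S E"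
  shows "a \<notin> S \<Longrightarrow> fst x a = 0" "snd x a b = - snd x b a" "{a,b} \<notin> E \<Longrightarrow> snd x a b = 0"
  using assms unfolding ncarrier_def mem_Collect_eq case_prod_unfold by blast+
lemma nadd_in: assumes "x \<in> ncarrier S E" "y \<in> ncarrier S E" shows "nadd x y \<in> ncarrier S E"
  unfolding nadd_def
proof (rule ncarrierI)
  fix a b
  show "snd x a b + snd y a b = - (snd x b a + snd y b a)"
    using ncarrierD(2)[OF assms(1), of a b] ncarrierD(2)[OF assms(2), of a b] by simp
qed (simp_all add: ncarrierD(1,3)[OF assms(1)] ncarrierD(1,3)[OF assms(2)])
lemma nsmul_in: assumes "x \<in> ncarrier S E" shows "nsmul c x \<in> ncarrier S E"
  unfolding nsmul_def
proof (rule ncarrierI)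
  fix a b
  show "c * snd x a b = - (c * snd x b a)"
    using ncarrierD(2)[OF assms(1), of a b] by simp
qed (simp_all add: ncarrierD(1,3)[OF assms(1)])
lemma nbracket_in: "nbracket E x y \<in> ncarrier S E"
  unfolding nbracket_def by (rule ncarrierI) (auto simp: insert_commute)

lemma nsmul_zero: "nsmul 0 x = zn" by (simp add: nsmul_def zn_def)

lemma iso_zero:
  assumes "\<forall>c. \<forall>x\<in>ncarrier S1 E1. f (nsmul c x) = nsmul c (f x)"
  shows "f zn = zn"
proof -
  have "f (nsmul 0 zn) = nsmul 0 (f zn)" using assms zn_in by blast
  thus ?thesis by (simp add: nsmul_zero)
qed

lemma lie_iso_sym:
  assumes "lie_iso TYPE('k::field) S1 E1 S2 E2"
  shows "lie_iso TYPE('k) S2 E2 S1 E1"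
proof -
  obtain f :: "('a,'k) nelem \<Rightarrow> ('a,'k) nelem" where
    b: "bij_betw f (ncarrier S1 E1) (ncarrier S2 E2)" and
    ad: "\<forall>x\<in>ncarrier S1 E1. \<forall>y\<in>ncarrier S1 E1. f (nadd x y) = nadd (f x) (f y)" and
    sm: "\<forall>c. \<forall>x\<in>ncarrier S1 E1. f (nsmul c x) = nsmul c (f x)" and
    br: "\<forall>x\<in>ncarrier S1 E1. \<forall>y\<in>ncarrier S1 E1. f (nbracket E1 x y) = nbracket E2 (f x) (f y)"
    using assms unfolding lie_iso_def by blast
  define g where "g = inv_into (ncarrier S1 E1) f"
  have gb: "bij_betw g (ncarrier S2 E2) (ncarrier S1 E1)" unfolding g_def by (rule bij_betw_inv_into[OF b])
  have inj: "inj_on f (ncarrier S1 E1)" using b bij_betw_def by blast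
  have gin: "g x \<in> ncarrier S1 E1" if "x \<in> ncarrier S2 E2" for x
    using gb that bij_betwE by blast
  have fg: "f (g x) = x" if "x \<in> ncarrier S2 E2" for x
    unfolding g_def using b that by (meson bij_betw_inv_into_right)
  have gf: "g (f x) = x" if "x \<in> ncarrier S1 E1" for x
    unfolding g_def using inj that by (simp add: inv_into_f_f)
  have "\<forall>x\<in>ncarrier S2 E2. \<forall>y\<in>ncarrier S2 E2. g (nadd x y) = nadd (g x) (g y)"
  proof (intro ballI)
    fix x y :: "('a,'k) nelem" assume xy: "x \<in> ncarrier S2 E2" "y \<in> ncarrier S2 E2"
    have "f (nadd (g x) (g y)) = nadd x y" using ad gin fg xy by simp
    hence "g (nadd x y) = g (f (nadd (g x) (g y)))" by simp
    also have "\<dots> = nadd (g x) (g y)" using gf nadd_in gin xy by blast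
    finally show "g (nadd x y) = nadd (g x) (g y)" .
  qed
  moreover have "\<forall>c. \<forall>x\<in>ncarrier S2 E2. g (nsmul c x) = nsmul c (g x)"
  proof (intro allI ballI)
    fix c and x :: "('a,'k) nelem" assume xy: "x \<in> ncarrier S2 E2"
    have "f (nsmul c (g x)) = nsmul c x" using sm gin fg xy by simp
    hence "g (nsmul c x) = g (f (nsmul c (g x)))" by simp
    also have "\<dots> = nsmul c (g x)" using gf nsmul_in gin xy by blast
    finally show "g (nsmul c x) = nsmul c (g x)" .
  qed
  moreover have "\<forall>x\<in>ncarrier S2 E2. \<forall>y\<in>ncarrier S2 E2. g (nbracket E2 x y) = nbracket E1 (g x) (g y)"
  proof (intro ballI)
    fix x y :: "('a,'k) nelem" assume xy: "x \<in> ncarrier S2 E2" "y \<in> ncarrier S2 E2"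
    have "f (nbracket E1 (g x) (g y)) = nbracket E2 x y" using br gin fg xy by simp
    hence "g (nbracket E2 x y) = g (f (nbracket E1 (g x) (g y)))" by simp
    also have "\<dots> = nbracket E1 (g x) (g y)" using gf nbracket_in by blast
    finally show "g (nbracket E2 x y) = nbracket E1 (g x) (g y)" .
  qed
  ultimately show ?thesis unfolding lie_iso_def using gb by blast
qed

lemma lie_iso_trans:
  assumes "lie_iso TYPE('k::field) S1 E1 S2 E2" "lie_iso TYPE('k) S2 E2 S3 E3"
  shows "lie_iso TYPE('k) S1 E1 S3 E3"
proof -
  obtain f :: "('a,'k) nelem \<Rightarrow> ('a,'k) nelem" where
    b: "bij_betw f (ncarrier S1 E1) (ncarrier S2 E2)" and
    ad: "\<forall>x\<in>ncarrier S1 E1. \<forall>y\<in>ncarrier S1 E1. f (nadd x y) = nadd (f x) (f y)" and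
    sm: "\<forall>c. \<forall>x\<in>ncarrier S1 E1. f (nsmul c x) = nsmul c (f x)" and
    br: "\<forall>x\<in>ncarrier S1 E1. \<forall>y\<in>ncarrier S1 E1. f (nbracket E1 x y) = nbracket E2 (f x) (f y)"
    using assms(1) unfolding lie_iso_def by blast
  obtain g :: "('a,'k) nelem \<Rightarrow> ('a,'k) nelem" where
    b2: "bij_betw g (ncarrier S2 E2) (ncarrier S3 E3)" and
    ad2: "\<forall>x\<in>ncarrier S2 E2. \<forall>y\<in>ncarrier S2 E2. g (nadd x y) = nadd (g x) (g y)" and
    sm2: "\<forall>c. \<forall>x\<in>ncarrier S2 E2. g (nsmul c x) = nsmul c (g x)" and
    br2: "\<forall>x\<in>ncarrier S2 E2. \<forall>y\<in>ncarrier S2 E2. g (nbracket E2 x y) = nbracket E3 (g x) (g y)"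
    using assms(2) unfolding lie_iso_def by blast
  have fin: "f x \<in> ncarrier S2 E2" if "x \<in> ncarrier S1 E1" for x using b that bij_betwE by blast
  have "bij_betw (g \<circ> f) (ncarrier S1 E1) (ncarrier S3 E3)" using b b2 by (rule bij_betw_trans)
  moreover have "\<forall>x\<in>ncarrier S1 E1. \<forall>y\<in>ncarrier S1 E1. (g \<circ> f) (nadd x y) = nadd ((g \<circ> f) x) ((g \<circ> f) y)"
    using ad ad2 fin by simp
  moreover have "\<forall>c. \<forall>x\<in>ncarrier S1 E1. (g \<circ> f) (nsmul c x) = nsmul c ((g \<circ> f) x)"
    using sm sm2 fin by simp
  moreover have "\<forall>x\<in>ncarrier S1 E1. \<forall>y\<in>ncarrier S1 E1. (g \<circ> f) (nbracket E1 x y) = nbracket E3 ((g \<circ> f) x) ((g \<circ> f) y)"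
    using br br2 fin by simp
  ultimately show ?thesis unfolding lie_iso_def by blast
qed

lemma lie_iso_refl: "lie_iso TYPE('k::field) S E S E"
  unfolding lie_iso_def by (rule exI[of _ id]) simp

lemma sg_edge: "simple_graph S E \<Longrightarrow> {a,b} \<in> E \<Longrightarrow> a \<in> S \<and> b \<in> S \<and> a \<noteq> b"
  unfolding simple_graph_def by (auto simp: doubleton_eq_iff)

lemma graph_lie_iso:
  assumes sg: "simple_graph S1 E1" and bj: "bij_betw \<sigma> S1 S2" and e: "E2 = (\<lambda>e. \<sigma> ` e) ` E1"
  shows "lie_iso TYPE('k::field) S1 E1 S2 E2"
proof -
  define \<tau> where "\<tau> = inv_into S1 \<sigma>"
  have tb: "bij_betw \<tau> S2 S1" unfolding \<tau>_def using bj by (rule bij_betw_inv_into)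
  have st: "\<sigma> (\<tau> a) = a" if "a \<in> S2" for a
    unfolding \<tau>_def using bj that by (meson bij_betw_inv_into_right)
  have ts: "\<tau> (\<sigma> a) = a" if "a \<in> S1" for a
    unfolding \<tau>_def using bj that by (simp add: bij_betw_def inv_into_f_f)
  have tin: "\<tau> a \<in> S1" if "a \<in> S2" for a using tb that bij_betwE by blast
  have sin: "\<sigma> a \<in> S1 \<Longrightarrow> True" for a by simp
  have sin2: "\<sigma> a \<in> S2" if "a \<in> S1" for a using bj that bij_betwE by blast
  have e1S: "a \<in> S1 \<and> b \<in> S1" if "{a,b} \<in> E1" for a b using sg_edge[OF sg that] by blast
  have e2S: "a \<in> S2 \<and> b \<in> S2" if "{a,b} \<in> E2" for a b
  proof -
    from that e obtain ed where ed: "ed \<in> E1" "{a,b} = \<sigma> ` ed" by blast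
    from ed(1) sg obtain p q where "ed = {p,q}" "p \<in> S1" "q \<in> S1" unfolding simple_graph_def by blast
    with ed(2) sin2 show ?thesis by (auto simp: doubleton_eq_iff)
  qed
  have corr: "{a,b} \<in> E2 \<longleftrightarrow> {\<tau> a, \<tau> b} \<in> E1" if "a \<in> S2" "b \<in> S2" for a b
  proof
    assume "{a,b} \<in> E2"
    from this e obtain ed where ed: "ed \<in> E1" "{a,b} = \<sigma> ` ed" by blast
    from ed(1) sg obtain p q where pq: "ed = {p,q}" "p \<in> S1" "q \<in> S1" unfolding simple_graph_def by blast
    have "{a,b} = {\<sigma> p, \<sigma> q}" using ed(2) pq by simp
    hence "{\<tau> a, \<tau> b} = {p, q}" using ts pq by (auto simp: doubleton_eq_iff)
    thus "{\<tau> a, \<tau> b} \<in> E1" using ed pq by simp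
  next
    assume "{\<tau> a, \<tau> b} \<in> E1"
    hence "\<sigma> ` {\<tau> a, \<tau> b} \<in> E2" using e by blast
    thus "{a,b} \<in> E2" using st that by simp
  qed
  define F :: "('a,'k) nelem \<Rightarrow> ('a,'k) nelem" where
    "F x = (\<lambda>a. if a \<in> S2 then fst x (\<tau> a) else 0, \<lambda>a b. if a \<in> S2 \<and> b \<in> S2 then snd x (\<tau> a) (\<tau> b) else 0)" for x
  define G :: "('a,'k) nelem \<Rightarrow> ('a,'k) nelem" where
    "G x = (\<lambda>a. if a \<in> S1 then fst x (\<sigma> a) else 0, \<lambda>a b. if a \<in> S1 \<and> b \<in> S1 then snd x (\<sigma> a) (\<sigma> b) else 0)" for x
  have Fin: "F x \<in> ncarrier S2 E2" if x: "x \<in> ncarrier S1 E1" for x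
    unfolding F_def
  proof (rule ncarrierI)
    fix a b
    show "(if a \<in> S2 \<and> b \<in> S2 then snd x (\<tau> a) (\<tau> b) else 0) = - (if b \<in> S2 \<and> a \<in> S2 then snd x (\<tau> b) (\<tau> a) else 0)"
      using ncarrierD(2)[OF x, of "\<tau> a" "\<tau> b"] by auto
  next
    fix a b assume "{a,b} \<notin> E2"
    thus "(if a \<in> S2 \<and> b \<in> S2 then snd x (\<tau> a) (\<tau> b) else 0) = 0"
      using corr ncarrierD(3)[OF x, of "\<tau> a" "\<tau> b"] by auto
  qed simp
  have Gin: "G x \<in> ncarrier S1 E1" if x: "x \<in> ncarrier S2 E2" for x
    unfolding G_def
  proof (rule ncarrierI)
    fix a b
    show "(if a \<in> S1 \<and> b \<in> S1 then snd x (\<sigma> a) (\<sigma> b) else 0) = - (if b \<in> S1 \<and> a \<in> S1 then snd x (\<sigma> b) (\<sigma> a) else 0)"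
      using ncarrierD(2)[OF x, of "\<sigma> a" "\<sigma> b"] by auto
  next
    fix a b assume ab: "{a,b} \<notin> E1"
    show "(if a \<in> S1 \<and> b \<in> S1 then snd x (\<sigma> a) (\<sigma> b) else 0) = 0"
    proof (cases "a \<in> S1 \<and> b \<in> S1")
      case True
      hence "{\<sigma> a, \<sigma> b} \<notin> E2" using corr[of "\<sigma> a" "\<sigma> b"] sin2 ts ab by auto
      thus ?thesis using ncarrierD(3)[OF x] True by simp
    qed auto
  qed simp
  have GF: "G (F x) = x" if x: "x \<in> ncarrier S1 E1" for x
  proof -
    have "fst (G (F x)) = fst x"
    proof
      fix a show "fst (G (F x)) a = fst x a"
        using ncarrierD(1)[OF x, of a] sin2 ts unfolding F_def G_def by auto
    qed
    moreover have "snd (G (F x)) = snd x"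
    proof (intro ext)
      fix a b show "snd (G (F x)) a b = snd x a b"
      proof (cases "a \<in> S1 \<and> b \<in> S1")
        case True thus ?thesis using sin2 ts unfolding F_def G_def by auto
      next
        case False
        hence "{a,b} \<notin> E1" using e1S by blast
        thus ?thesis using ncarrierD(3)[OF x, of a b] False unfolding F_def G_def by auto
      qed
    qed
    ultimately show ?thesis by (simp add: prod_eq_iff)
  qed
  have FG: "F (G x) = x" if x: "x \<in> ncarrier S2 E2" for x
  proof -
    have "fst (F (G x)) = fst x"
    proof
      fix a show "fst (F (G x)) a = fst x a"
        using ncarrierD(1)[OF x, of a] tin st unfolding F_def G_def by auto
    qed
    moreover have "snd (F (G x)) = snd x"
    proof (intro ext)
      fix a b show "snd (F (G x)) a b = snd x a b"
      proof (cases "a \<in> S2 \<and> b \<in> S2")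
        case True thus ?thesis using tin st unfolding F_def G_def by auto
      next
        case False
        hence "{a,b} \<notin> E2" using e2S by blast
        thus ?thesis using ncarrierD(3)[OF x, of a b] False unfolding F_def G_def by auto
      qed
    qed
    ultimately show ?thesis by (simp add: prod_eq_iff)
  qed
  have bF: "bij_betw F (ncarrier S1 E1) (ncarrier S2 E2)"
    by (rule bij_betw_byWitness[where f'=G]) (use GF FG Fin Gin in auto)
  have aF: "F (nadd x y) = nadd (F x) (F y)" for x y
    unfolding F_def nadd_def by (auto intro!: ext)
  have mF: "F (nsmul c x) = nsmul c (F x)" for c x
    unfolding F_def nsmul_def by (auto intro!: ext)
  have brF: "F (nbracket E1 x y) = nbracket E2 (F x) (F y)" for x y
  proof -
    have "snd (F (nbracket E1 x y)) a b = snd (nbracket E2 (F x) (F y)) a b" for a b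
    proof (cases "a \<in> S2 \<and> b \<in> S2")
      case True thus ?thesis using corr[of a b] unfolding F_def nbracket_def by auto
    next
      case False
      hence "{a,b} \<notin> E2" using e2S by blast
      thus ?thesis using False unfolding F_def nbracket_def by auto
    qed
    moreover have "fst (F (nbracket E1 x y)) = fst (nbracket E2 (F x) (F y))"
      unfolding F_def nbracket_def by auto
    ultimately show ?thesis by (simp add: prod_eq_iff ext)
  qed
  show ?thesis unfolding lie_iso_def using bF aF mF brF by blast
qed

definition P1 :: "'k::field itself \<Rightarrow> 'a set \<Rightarrow> 'a set set \<Rightarrow> bool" where
  "P1 t S E \<longleftrightarrow> (\<forall>x\<in>ncarrier S E. \<forall>y\<in>ncarrier S E. nbracket E x (y::('a,'k) nelem) = zn)"
definition P2 :: "'k::field itself \<Rightarrow> 'a set \<Rightarrow> 'a set set \<Rightarrow> bool" where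
  "P2 t S E \<longleftrightarrow> (\<exists>z\<in>ncarrier S E. \<forall>x\<in>ncarrier S E. \<forall>y\<in>ncarrier S E. \<exists>c.
      nbracket E x (y::('a,'k) nelem) = nsmul c z)"
definition P3 :: "'k::field itself \<Rightarrow> 'a set \<Rightarrow> 'a set set \<Rightarrow> bool" where
  "P3 t S E \<longleftrightarrow> (\<exists>z1\<in>ncarrier S E. \<exists>z2\<in>ncarrier S E. \<forall>x\<in>ncarrier S E. \<forall>y\<in>ncarrier S E. \<exists>c1 c2.
      nbracket E x (y::('a,'k) nelem) = nadd (nsmul c1 z1) (nsmul c2 z2))"
definition Q :: "'k::field itself \<Rightarrow> 'a set \<Rightarrow> 'a set set \<Rightarrow> bool" where
  "Q t S E \<longleftrightarrow> (\<exists>z\<in>ncarrier S E. (\<forall>y\<in>ncarrier S E. nbracket E z (y::('a,'k) nelem) = zn) \<and>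
      (\<forall>x\<in>ncarrier S E. \<forall>y\<in>ncarrier S E. nbracket E x y \<noteq> z))"

lemma lie_isoE:
  assumes "lie_iso TYPE('k::field) S1 E1 S2 E2"
  obtains f :: "('a,'k::field) nelem \<Rightarrow> ('a,'k) nelem" where
    "\<And>x. x \<in> ncarrier S1 E1 \<Longrightarrow> f x \<in> ncarrier S2 E2"
    "\<And>x'. x' \<in> ncarrier S2 E2 \<Longrightarrow> \<exists>x\<in>ncarrier S1 E1. f x = x'"
    "inj_on f (ncarrier S1 E1)"
    "\<And>x y. x \<in> ncarrier S1 E1 \<Longrightarrow> y \<in> ncarrier S1 E1 \<Longrightarrow> f (nadd x y) = nadd (f x) (f y)"
    "\<And>c x. x \<in> ncarrier S1 E1 \<Longrightarrow> f (nsmul c x) = nsmul c (f x)"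
    "\<And>x y. x \<in> ncarrier S1 E1 \<Longrightarrow> y \<in> ncarrier S1 E1 \<Longrightarrow> f (nbracket E1 x y) = nbracket E2 (f x) (f y)"
    "f zn = zn"
proof -
  obtain f :: "('a,'k) nelem \<Rightarrow> ('a,'k) nelem" where
    b: "bij_betw f (ncarrier S1 E1) (ncarrier S2 E2)" and
    ad: "\<forall>x\<in>ncarrier S1 E1. \<forall>y\<in>ncarrier S1 E1. f (nadd x y) = nadd (f x) (f y)" and
    sm: "\<forall>c. \<forall>x\<in>ncarrier S1 E1. f (nsmul c x) = nsmul c (f x)" and
    br: "\<forall>x\<in>ncarrier S1 E1. \<forall>y\<in>ncarrier S1 E1. f (nbracket E1 x y) = nbracket E2 (f x) (f y)"
    using assms unfolding lie_iso_def by blast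
  have inj: "inj_on f (ncarrier S1 E1)" and im: "f ` ncarrier S1 E1 = ncarrier S2 E2"
    using b unfolding bij_betw_def by auto
  show ?thesis
  proof (rule that[of f])
    show "\<And>x. x \<in> ncarrier S1 E1 \<Longrightarrow> f x \<in> ncarrier S2 E2" using im by blast
    show "\<And>x'. x' \<in> ncarrier S2 E2 \<Longrightarrow> \<exists>x\<in>ncarrier S1 E1. f x = x'" using im by (metis imageE)
  qed (use inj ad sm br iso_zero[OF sm] in auto)
qed

lemma P1_tr: assumes "lie_iso TYPE('k::field) S1 E1 S2 E2" "P1 TYPE('k) S1 E1" shows "P1 TYPE('k) S2 E2"
proof (rule lie_isoE[OF assms(1)])
  fix f :: "('a,'k) nelem \<Rightarrow> ('a,'k) nelem"
  assume f1: "\<And>x. x \<in> ncarrier S1 E1 \<Longrightarrow> f x \<in> ncarrier S2 E2"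
    and f2: "\<And>x'. x' \<in> ncarrier S2 E2 \<Longrightarrow> \<exists>x\<in>ncarrier S1 E1. f x = x'"
    and f3: "inj_on f (ncarrier S1 E1)"
    and f4: "\<And>x y. x \<in> ncarrier S1 E1 \<Longrightarrow> y \<in> ncarrier S1 E1 \<Longrightarrow> f (nadd x y) = nadd (f x) (f y)"
    and f5: "\<And>c x. x \<in> ncarrier S1 E1 \<Longrightarrow> f (nsmul c x) = nsmul c (f x)"
    and f6: "\<And>x y. x \<in> ncarrier S1 E1 \<Longrightarrow> y \<in> ncarrier S1 E1 \<Longrightarrow> f (nbracket E1 x y) = nbracket E2 (f x) (f y)"
    and f7: "f zn = zn"
  show ?thesis unfolding P1_def
  proof (intro ballI)
    fix x' y' :: "('a,'k) nelem" assume "x' \<in> ncarrier S2 E2" "y' \<in> ncarrier S2 E2"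
    then obtain x y where xy: "x \<in> ncarrier S1 E1" "y \<in> ncarrier S1 E1" "f x = x'" "f y = y'" using f2 by metis
    have "nbracket E1 x y = zn" using assms(2) xy unfolding P1_def by blast
    thus "nbracket E2 x' y' = zn" using f6[OF xy(1,2)] f7 xy by simp
  qed
qed

lemma P2_tr: assumes "lie_iso TYPE('k::field) S1 E1 S2 E2" "P2 TYPE('k) S1 E1" shows "P2 TYPE('k) S2 E2"
proof (rule lie_isoE[OF assms(1)])
  fix f :: "('a,'k) nelem \<Rightarrow> ('a,'k) nelem"
  assume f1: "\<And>x. x \<in> ncarrier S1 E1 \<Longrightarrow> f x \<in> ncarrier S2 E2"
    and f2: "\<And>x'. x' \<in> ncarrier S2 E2 \<Longrightarrow> \<exists>x\<in>ncarrier S1 E1. f x = x'"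
    and f3: "inj_on f (ncarrier S1 E1)"
    and f4: "\<And>x y. x \<in> ncarrier S1 E1 \<Longrightarrow> y \<in> ncarrier S1 E1 \<Longrightarrow> f (nadd x y) = nadd (f x) (f y)"
    and f5: "\<And>c x. x \<in> ncarrier S1 E1 \<Longrightarrow> f (nsmul c x) = nsmul c (f x)"
    and f6: "\<And>x y. x \<in> ncarrier S1 E1 \<Longrightarrow> y \<in> ncarrier S1 E1 \<Longrightarrow> f (nbracket E1 x y) = nbracket E2 (f x) (f y)"
    and f7: "f zn = zn"
  obtain z :: "('a,'k) nelem" where z: "z \<in> ncarrier S1 E1" "\<forall>x\<in>ncarrier S1 E1. \<forall>y\<in>ncarrier S1 E1. \<exists>c. nbracket E1 x y = nsmul c z"
    using assms(2) unfolding P2_def by blast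
  show ?thesis unfolding P2_def
  proof (intro bexI[of _ "f z"] ballI)
    fix x' y' :: "('a,'k) nelem" assume "x' \<in> ncarrier S2 E2" "y' \<in> ncarrier S2 E2"
    then obtain x y where xy: "x \<in> ncarrier S1 E1" "y \<in> ncarrier S1 E1" "f x = x'" "f y = y'" using f2 by metis
    obtain c where "nbracket E1 x y = nsmul c z" using z xy by blast
    hence "nbracket E2 x' y' = nsmul c (f z)" using f6[OF xy(1,2)] f5[OF z(1)] xy by simp
    thus "\<exists>c. nbracket E2 x' y' = nsmul c (f z)" ..
  qed (rule f1[OF z(1)])
qed

lemma P3_tr: assumes "lie_iso TYPE('k::field) S1 E1 S2 E2" "P3 TYPE('k) S1 E1" shows "P3 TYPE('k) S2 E2"
proof (rule lie_isoE[OF assms(1)])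
  fix f :: "('a,'k) nelem \<Rightarrow> ('a,'k) nelem"
  assume f1: "\<And>x. x \<in> ncarrier S1 E1 \<Longrightarrow> f x \<in> ncarrier S2 E2"
    and f2: "\<And>x'. x' \<in> ncarrier S2 E2 \<Longrightarrow> \<exists>x\<in>ncarrier S1 E1. f x = x'"
    and f3: "inj_on f (ncarrier S1 E1)"
    and f4: "\<And>x y. x \<in> ncarrier S1 E1 \<Longrightarrow> y \<in> ncarrier S1 E1 \<Longrightarrow> f (nadd x y) = nadd (f x) (f y)"
    and f5: "\<And>c x. x \<in> ncarrier S1 E1 \<Longrightarrow> f (nsmul c x) = nsmul c (f x)"
    and f6: "\<And>x y. x \<in> ncarrier S1 E1 \<Longrightarrow> y \<in> ncarrier S1 E1 \<Longrightarrow> f (nbracket E1 x y) = nbracket E2 (f x) (f y)"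
    and f7: "f zn = zn"
  obtain z1 z2 :: "('a,'k) nelem" where z: "z1 \<in> ncarrier S1 E1" "z2 \<in> ncarrier S1 E1" "\<forall>x\<in>ncarrier S1 E1. \<forall>y\<in>ncarrier S1 E1. \<exists>c1 c2. nbracket E1 x y = nadd (nsmul c1 z1) (nsmul c2 z2)"
    using assms(2) unfolding P3_def by blast
  show ?thesis unfolding P3_def
  proof (rule bexI[of _ "f z1"], rule bexI[of _ "f z2"], intro ballI)
    fix x' y' :: "('a,'k) nelem" assume "x' \<in> ncarrier S2 E2" "y' \<in> ncarrier S2 E2"
    then obtain x y where xy: "x \<in> ncarrier S1 E1" "y \<in> ncarrier S1 E1" "f x = x'" "f y = y'" using f2 by metis
    obtain c1 c2 where "nbracket E1 x y = nadd (nsmul c1 z1) (nsmul c2 z2)" using z xy by blast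
    hence "nbracket E2 x' y' = nadd (nsmul c1 (f z1)) (nsmul c2 (f z2))"
      using f6[OF xy(1,2)] f5 z f4[OF nsmul_in[OF z(1)] nsmul_in[OF z(2)]] xy by simp
    thus "\<exists>c1 c2. nbracket E2 x' y' = nadd (nsmul c1 (f z1)) (nsmul c2 (f z2))" by blast
  qed (use f1 z in auto)
qed

lemma Q_tr: assumes "lie_iso TYPE('k::field) S1 E1 S2 E2" "Q TYPE('k) S1 E1" shows "Q TYPE('k) S2 E2"
proof (rule lie_isoE[OF assms(1)])
  fix f :: "('a,'k) nelem \<Rightarrow> ('a,'k) nelem"
  assume f1: "\<And>x. x \<in> ncarrier S1 E1 \<Longrightarrow> f x \<in> ncarrier S2 E2"
    and f2: "\<And>x'. x' \<in> ncarrier S2 E2 \<Longrightarrow> \<exists>x\<in>ncarrier S1 E1. f x = x'"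
    and f3: "inj_on f (ncarrier S1 E1)"
    and f4: "\<And>x y. x \<in> ncarrier S1 E1 \<Longrightarrow> y \<in> ncarrier S1 E1 \<Longrightarrow> f (nadd x y) = nadd (f x) (f y)"
    and f5: "\<And>c x. x \<in> ncarrier S1 E1 \<Longrightarrow> f (nsmul c x) = nsmul c (f x)"
    and f6: "\<And>x y. x \<in> ncarrier S1 E1 \<Longrightarrow> y \<in> ncarrier S1 E1 \<Longrightarrow> f (nbracket E1 x y) = nbracket E2 (f x) (f y)"
    and f7: "f zn = zn"
  obtain z :: "('a,'k) nelem" where z: "z \<in> ncarrier S1 E1" "\<forall>y\<in>ncarrier S1 E1. nbracket E1 z y = zn"
     "\<forall>x\<in>ncarrier S1 E1. \<forall>y\<in>ncarrier S1 E1. nbracket E1 x y \<noteq> z"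
    using assms(2) unfolding Q_def by blast
  show ?thesis unfolding Q_def
  proof (intro bexI[of _ "f z"] conjI ballI)
    fix y' :: "('a,'k) nelem" assume "y' \<in> ncarrier S2 E2"
    then obtain y where xy: "y \<in> ncarrier S1 E1" "f y = y'" using f2 by metis
    show "nbracket E2 (f z) y' = zn" using f6[OF z(1) xy(1)] z xy f7 by simp
  next
    fix x' y' :: "('a,'k) nelem" assume "x' \<in> ncarrier S2 E2" "y' \<in> ncarrier S2 E2"
    then obtain x y where xy: "x \<in> ncarrier S1 E1" "y \<in> ncarrier S1 E1" "f x = x'" "f y = y'" using f2 by metis
    show "nbracket E2 x' y' \<noteq> f z"
    proof
      assume "nbracket E2 x' y' = f z"
      hence "f (nbracket E1 x y) = f z" using f6[OF xy(1,2)] xy by simp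
      hence "nbracket E1 x y = z" using f3 z(1) nbracket_in inj_onD by metis
      thus False using z xy by blast
    qed
  qed (rule f1[OF z(1)])
qed

definition ev :: "'a \<Rightarrow> ('a,'k::field) nelem" where "ev i = (\<lambda>a. if a = i then 1 else 0, \<lambda>a b. 0)"

lemma ev_in: "i \<in> S \<Longrightarrow> ev i \<in> ncarrier S E"
  unfolding ev_def by (rule ncarrierI) auto

lemma snd_eq: "x = y \<Longrightarrow> snd x a b = snd y a b" by simp

abbreviation "S2 \<equiv> {0,1,2,3,4::nat}"
abbreviation "E2 \<equiv> {{0,1::nat}}"
abbreviation "S3 \<equiv> {0,1,2,3::nat}"
abbreviation "E3 \<equiv> {{0,1},{1,2::nat}}"
abbreviation "E4 \<equiv> {{0,1},{2,3::nat}}"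
abbreviation "S5 \<equiv> {0,1,2::nat}"
abbreviation "E5 \<equiv> {{0,1},{1,2},{0,2::nat}}"

lemma notP1_R2: "\<not> P1 TYPE('k::field) S2 E2"
proof
  assume "P1 TYPE('k) S2 E2"
  hence "nbracket E2 (ev 0) (ev 1) = (zn :: (nat,'k) nelem)" unfolding P1_def using ev_in[of 0 S2 E2] ev_in[of 1 S2 E2] by blast
  from snd_eq[OF this, of 0 1] show False by (simp add: nbracket_def ev_def zn_def)
qed

lemma P1_R1: "P1 TYPE('k::field) S {}"
  unfolding P1_def nbracket_def zn_def by simp

lemma P2_R2: "P2 TYPE('k::field) S2 E2"
  unfolding P2_def
proof (rule bexI[of _ "nbracket E2 (ev 0) (ev 1)"], intro ballI)
  fix x y :: "(nat,'k) nelem"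
  show "\<exists>c. nbracket E2 x y = nsmul c (nbracket E2 (ev 0) (ev 1))"
    by (rule exI[of _ "fst x 0 * fst y 1 - fst x 1 * fst y 0"])
       (auto simp: nbracket_def nsmul_def ev_def doubleton_eq_iff algebra_simps intro!: ext)
qed (rule nbracket_in)

lemma notP2_R3: "\<not> P2 TYPE('k::field) S3 E3"
proof
  assume "P2 TYPE('k) S3 E3"
  then obtain z :: "(nat,'k) nelem" where z: "\<forall>x\<in>ncarrier S3 E3. \<forall>y\<in>ncarrier S3 E3. \<exists>c. nbracket E3 x y = nsmul c z"
    unfolding P2_def by blast
  obtain c1 where c1: "nbracket E3 (ev 0) (ev 1) = nsmul c1 z" using z ev_in[of 0 S3] ev_in[of 1 S3] by blast
  obtain c2 where c2: "nbracket E3 (ev 1) (ev 2) = nsmul c2 z" using z ev_in[of 1 S3] ev_in[of 2 S3] by blast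
  have a: "1 = c1 * snd z 0 1" "0 = c2 * snd z 0 1"
    using snd_eq[OF c1, of 0 1] snd_eq[OF c2, of 0 1] by (simp_all add: nbracket_def nsmul_def ev_def)
  have b: "1 = c2 * snd z 1 2"
    using snd_eq[OF c2, of 1 2] by (simp_all add: nbracket_def nsmul_def ev_def)
  from a have "c2 = 0" by (metis mult_eq_0_iff zero_neq_one)
  with b show False by simp
qed

lemma notP2_R4: "\<not> P2 TYPE('k::field) S3 E4"
proof
  assume "P2 TYPE('k) S3 E4"
  then obtain z :: "(nat,'k) nelem" where z: "\<forall>x\<in>ncarrier S3 E4. \<forall>y\<in>ncarrier S3 E4. \<exists>c. nbracket E4 x y = nsmul c z"
    unfolding P2_def by blast
  obtain c1 where c1: "nbracket E4 (ev 0) (ev 1) = nsmul c1 z" using z ev_in[of 0 S3] ev_in[of 1 S3] by blast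
  obtain c2 where c2: "nbracket E4 (ev 2) (ev 3) = nsmul c2 z" using z ev_in[of 2 S3] ev_in[of 3 S3] by blast
  have a: "1 = c1 * snd z 0 1" "0 = c2 * snd z 0 1"
    using snd_eq[OF c1, of 0 1] snd_eq[OF c2, of 0 1] by (simp_all add: nbracket_def nsmul_def ev_def)
  have b: "1 = c2 * snd z 2 3"
    using snd_eq[OF c2, of 2 3] by (simp_all add: nbracket_def nsmul_def ev_def)
  from a have "c2 = 0" by (metis mult_eq_0_iff zero_neq_one)
  with b show False by simp
qed

lemma P3_R3: "P3 TYPE('k::field) S3 E3"
  unfolding P3_def
proof (rule bexI[of _ "nbracket E3 (ev 0) (ev 1)"], rule bexI[of _ "nbracket E3 (ev 1) (ev 2)"], intro ballI)
  fix x y :: "(nat,'k) nelem"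
  show "\<exists>c1 c2. nbracket E3 x y = nadd (nsmul c1 (nbracket E3 (ev 0) (ev 1))) (nsmul c2 (nbracket E3 (ev 1) (ev 2)))"
    by (rule exI[of _ "fst x 0 * fst y 1 - fst x 1 * fst y 0"], rule exI[of _ "fst x 1 * fst y 2 - fst x 2 * fst y 1"])
       (auto simp: nbracket_def nsmul_def nadd_def ev_def doubleton_eq_iff algebra_simps intro!: ext)
qed (rule nbracket_in)+

lemma P3_R4: "P3 TYPE('k::field) S3 E4"
  unfolding P3_def
proof (rule bexI[of _ "nbracket E4 (ev 0) (ev 1)"], rule bexI[of _ "nbracket E4 (ev 2) (ev 3)"], intro ballI)
  fix x y :: "(nat,'k) nelem"
  show "\<exists>c1 c2. nbracket E4 x y = nadd (nsmul c1 (nbracket E4 (ev 0) (ev 1))) (nsmul c2 (nbracket E4 (ev 2) (ev 3)))"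
    by (rule exI[of _ "fst x 0 * fst y 1 - fst x 1 * fst y 0"], rule exI[of _ "fst x 2 * fst y 3 - fst x 3 * fst y 2"])
       (auto simp: nbracket_def nsmul_def nadd_def ev_def doubleton_eq_iff algebra_simps intro!: ext)
qed (rule nbracket_in)+

lemma det3:
  fixes u1 u2 u3 w1 w2 w3 p1 p2 p3 q1 q2 q3 :: "'k::field"
  assumes "u1*p1 + w1*q1 = 1" "u1*p2 + w1*q2 = 0" "u1*p3 + w1*q3 = 0"
    "u2*p1 + w2*q1 = 0" "u2*p2 + w2*q2 = 1" "u2*p3 + w2*q3 = 0"
    "u3*p1 + w3*q1 = 0" "u3*p2 + w3*q2 = 0" "u3*p3 + w3*q3 = 1"
  shows False
proof -
  have "(u1*p1 + w1*q1) * ((u2*p2 + w2*q2) * (u3*p3 + w3*q3) - (u2*p3 + w2*q3) * (u3*p2 + w3*q2))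
      - (u1*p2 + w1*q2) * ((u2*p1 + w2*q1) * (u3*p3 + w3*q3) - (u2*p3 + w2*q3) * (u3*p1 + w3*q1))
      + (u1*p3 + w1*q3) * ((u2*p1 + w2*q1) * (u3*p2 + w3*q2) - (u2*p2 + w2*q2) * (u3*p1 + w3*q1)) = 0"
    by (simp add: algebra_simps)
  thus False using assms by simp
qed

lemma notP3_R5: "\<not> P3 TYPE('k::field) S5 E5"
proof
  assume "P3 TYPE('k) S5 E5"
  then obtain z1 z2 :: "(nat,'k) nelem" where z: "\<forall>x\<in>ncarrier S5 E5. \<forall>y\<in>ncarrier S5 E5. \<exists>c1 c2. nbracket E5 x y = nadd (nsmul c1 z1) (nsmul c2 z2)"
    unfolding P3_def by blast
  obtain u1 w1 where c1: "nbracket E5 (ev 0) (ev 1) = nadd (nsmul u1 z1) (nsmul w1 z2)" using z ev_in[of 0 S5] ev_in[of 1 S5] by blast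
  obtain u2 w2 where c2: "nbracket E5 (ev 1) (ev 2) = nadd (nsmul u2 z1) (nsmul w2 z2)" using z ev_in[of 1 S5] ev_in[of 2 S5] by blast
  obtain u3 w3 where c3: "nbracket E5 (ev 0) (ev 2) = nadd (nsmul u3 z1) (nsmul w3 z2)" using z ev_in[of 0 S5] ev_in[of 2 S5] by blast
  note e = snd_eq[OF c1, of 0 1] snd_eq[OF c1, of 1 2] snd_eq[OF c1, of 0 2]
    snd_eq[OF c2, of 0 1] snd_eq[OF c2, of 1 2] snd_eq[OF c2, of 0 2]
    snd_eq[OF c3, of 0 1] snd_eq[OF c3, of 1 2] snd_eq[OF c3, of 0 2]
  show False
    apply (rule det3[of u1 "snd z1 0 1" w1 "snd z2 0 1" "snd z1 1 2" "snd z2 1 2" "snd z1 0 2" "snd z2 0 2" u2 w2 u3 w3])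
    using e by (simp_all add: nbracket_def nsmul_def nadd_def ev_def)
qed

lemma Q_R3: "Q TYPE('k::field) S3 E3"
  unfolding Q_def
proof (rule bexI[of _ "ev 3"], intro conjI ballI)
  fix y :: "(nat,'k) nelem"
  show "nbracket E3 (ev 3) y = zn"
    by (auto simp: nbracket_def ev_def zn_def doubleton_eq_iff intro!: ext)
next
  fix x y :: "(nat,'k) nelem"
  show "nbracket E3 x y \<noteq> ev 3"
  proof
    assume "nbracket E3 x y = ev 3"
    hence "fst (nbracket E3 x y) 3 = fst (ev 3 :: (nat,'k) nelem) 3" by simp
    thus False by (simp add: nbracket_def ev_def)
  qed
qed (rule ev_in, simp)

lemma notQ_R4: "\<not> Q TYPE('k::field) S3 E4"
proof
  assume "Q TYPE('k) S3 E4"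
  then obtain z :: "(nat,'k) nelem" where z: "z \<in> ncarrier S3 E4" "\<forall>y\<in>ncarrier S3 E4. nbracket E4 z y = zn"
     "\<forall>x\<in>ncarrier S3 E4. \<forall>y\<in>ncarrier S3 E4. nbracket E4 x y \<noteq> z"
    unfolding Q_def by blast
  have h: "snd (nbracket E4 z (ev i)) a b = 0" if "i \<in> S3" for i a b
  proof -
    have "nbracket E4 z (ev i) = zn" using z(2) ev_in[OF that, of E4] by blast
    thus ?thesis by (simp add: zn_def)
  qed
  have z0: "fst z 0 = 0" using h[of 1 0 1] unfolding nbracket_def ev_def by simp
  have z1: "fst z 1 = 0" using h[of 0 0 1] unfolding nbracket_def ev_def by simp
  have z2: "fst z 2 = 0" using h[of 3 2 3] unfolding nbracket_def ev_def by simp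
  have z3: "fst z 3 = 0" using h[of 2 2 3] unfolding nbracket_def ev_def by simp
  have fz: "fst z = (\<lambda>a. 0)"
  proof
    fix a show "fst z a = 0"
      using z0 z1 z2 z3 ncarrierD(1)[OF z(1), of a] by (cases "a \<in> S3") auto
  qed
  define x :: "(nat,'k) nelem" where "x = (\<lambda>a. if a = 0 then snd z 0 1 else if a = 2 then snd z 2 3 else 0, \<lambda>a b. 0)"
  define y :: "(nat,'k) nelem" where "y = (\<lambda>a. if a = 1 \<or> a = 3 then 1 else 0, \<lambda>a b. 0)"
  have xin: "x \<in> ncarrier S3 E4" unfolding x_def by (rule ncarrierI) auto
  have yin: "y \<in> ncarrier S3 E4" unfolding y_def by (rule ncarrierI) auto
  have "nbracket E4 x y = z"
  proof (rule prod_eqI)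
    show "fst (nbracket E4 x y) = fst z" using fz by (simp add: nbracket_def)
    show "snd (nbracket E4 x y) = snd z"
    proof (intro ext)
      fix a b
      show "snd (nbracket E4 x y) a b = snd z a b"
      proof (cases "{a,b} \<in> E4")
        case True
        hence "(a = 0 \<and> b = 1) \<or> (a = 1 \<and> b = 0) \<or> (a = 2 \<and> b = 3) \<or> (a = 3 \<and> b = 2)"
          by (auto simp: doubleton_eq_iff)
        moreover have "snd z 1 0 = - snd z 0 1" "snd z 3 2 = - snd z 2 3"
          using ncarrierD(2)[OF z(1)] by blast+
        ultimately show ?thesis using True unfolding nbracket_def x_def y_def by (elim disjE) simp_all
      next
        case False
        thus ?thesis using ncarrierD(3)[OF z(1), of a b] by (simp add: nbracket_def)
      qed
    qed
  qed
  thus False using z(3) xin yin by blast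
qed

lemma extend_bij:
  assumes "finite A" "finite B" "card A = card B" "A0 \<subseteq> A" "B0 \<subseteq> B" "bij_betw f A0 B0"
  shows "\<exists>g. bij_betw g A B \<and> (\<forall>x\<in>A0. g x = f x)"
proof -
  have c0: "card A0 = card B0" using bij_betw_same_card assms(6) by blast
  have "card (A - A0) = card (B - B0)"
    using assms c0 by (simp add: card_Diff_subset finite_subset)
  then obtain h where h: "bij_betw h (A - A0) (B - B0)"
    using finite_same_card_bij assms(1,2) by (metis finite_Diff)
  define g where "g x = (if x \<in> A0 then f x else h x)" for x
  have "bij_betw g A0 B0" using assms(6) by (rule bij_betw_cong[THEN iffD1, rotated]) (simp add: g_def)
  moreover have "bij_betw g (A - A0) (B - B0)" using h by (rule bij_betw_cong[THEN iffD1, rotated]) (simp add: g_def)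
  ultimately have "bij_betw g (A0 \<union> (A - A0)) (B0 \<union> (B - B0))" by (rule bij_betw_combine) blast
  moreover have "A0 \<union> (A - A0) = A" "B0 \<union> (B - B0) = B" using assms(4,5) by blast+
  ultimately show ?thesis by (intro exI[of _ g]) (simp add: g_def)
qed

abbreviation "S1 \<equiv> {0,1,2,3,4,5::nat}"

lemma pairI: "a \<in> S \<Longrightarrow> b \<in> S \<Longrightarrow> a \<noteq> b \<Longrightarrow> {a,b} \<in> {{a,b} | a b. a \<in> S \<and> b \<in> S \<and> a \<noteq> b}"
  by blast

lemma sgE: "finite S \<Longrightarrow> simple_graph S {}" unfolding simple_graph_def by simp

lemma sgI: "finite S \<Longrightarrow> simple_graph S E \<Longrightarrow> a \<in> S \<Longrightarrow> b \<in> S \<Longrightarrow> a \<noteq> b \<Longrightarrow> simple_graph S (insert {a,b} E)"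
  unfolding simple_graph_def using pairI[of a S b] by (simp only: insert_subset) simp

lemma sg_reps: "simple_graph S1 {}" "simple_graph S2 E2" "simple_graph S3 E3" "simple_graph S3 E4" "simple_graph S5 E5"
  by (intro sgI sgE; simp)+

lemma type1: assumes "finite S" "card S = 6" shows "lie_iso TYPE('k::field) S1 {} S {}"
proof -
  obtain g where "bij_betw g S1 S" using finite_same_card_bij[of S1 S] assms by auto
  thus ?thesis by (rule graph_lie_iso[OF sg_reps(1)]) simp
qed

lemma type2: assumes "finite S" "card S = 5" "a \<in> S" "b \<in> S" "a \<noteq> b"
  shows "lie_iso TYPE('k::field) S2 E2 S {{a,b}}"
proof -
  have bf: "bij_betw (\<lambda>x. if x = 0 then a else b) {0,1::nat} {a,b}" using assms by (auto simp: bij_betw_def inj_on_def)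
  have "\<exists>g. bij_betw g S2 S \<and> (\<forall>x\<in>{0,1}. g x = (if x = 0 then a else b))"
    by (rule extend_bij[OF _ assms(1) _ _ _ bf]) (use assms in auto)
  then obtain g where g: "bij_betw g S2 S" "\<forall>x\<in>{0,1}. g x = (if x = 0 then a else b)" by blast
  have "{{a,b}} = (\<lambda>e. g ` e) ` E2" using g(2) by simp
  thus ?thesis by (rule graph_lie_iso[OF sg_reps(2) g(1)])
qed

lemma type3: assumes "finite S" "card S = 4" "a \<in> S" "b \<in> S" "c \<in> S" "a \<noteq> b" "a \<noteq> c" "b \<noteq> c"
  shows "lie_iso TYPE('k::field) S3 E3 S {{a,b},{b,c}}"
proof -
  have bf: "bij_betw (\<lambda>x. if x = 0 then a else if x = 1 then b else c) {0,1,2::nat} {a,b,c}"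
    using assms by (auto simp: bij_betw_def inj_on_def)
  have "\<exists>g. bij_betw g S3 S \<and> (\<forall>x\<in>{0,1,2}. g x = (if x = 0 then a else if x = 1 then b else c))"
    by (rule extend_bij[OF _ assms(1) _ _ _ bf]) (use assms in auto)
  then obtain g where g: "bij_betw g S3 S" "\<forall>x\<in>{0,1,2}. g x = (if x = 0 then a else if x = 1 then b else c)" by blast
  have "{{a,b},{b,c}} = (\<lambda>e. g ` e) ` E3" using g(2) by simp
  thus ?thesis by (rule graph_lie_iso[OF sg_reps(3) g(1)])
qed

lemma type4: assumes "finite S" "card S = 4" "a \<in> S" "b \<in> S" "c \<in> S" "d \<in> S" "a \<noteq> b" "a \<noteq> c" "b \<noteq> c"
   "a \<noteq> d" "b \<noteq> d" "c \<noteq> d"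
  shows "lie_iso TYPE('k::field) S3 E4 S {{a,b},{c,d}}"
proof -
  have bf: "bij_betw (\<lambda>x. if x = 0 then a else if x = 1 then b else if x = 2 then c else d) {0,1,2,3::nat} {a,b,c,d}"
    using assms by (auto simp: bij_betw_def inj_on_def)
  have "\<exists>g. bij_betw g S3 S \<and> (\<forall>x\<in>{0,1,2,3}. g x = (if x = 0 then a else if x = 1 then b else if x = 2 then c else d))"
    by (rule extend_bij[OF _ assms(1) _ _ _ bf]) (use assms in auto)
  then obtain g where g: "bij_betw g S3 S" "\<forall>x\<in>{0,1,2,3}. g x = (if x = 0 then a else if x = 1 then b else if x = 2 then c else d)" by blast
  have "{{a,b},{c,d}} = (\<lambda>e. g ` e) ` E4" using g(2) by simp
  thus ?thesis by (rule graph_lie_iso[OF sg_reps(4) g(1)])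
qed

lemma type5: assumes "a \<noteq> b" "a \<noteq> c" "b \<noteq> c"
  shows "lie_iso TYPE('k::field) S5 E5 {a,b,c} {{a,b},{b,c},{a,c}}"
proof -
  have g1: "bij_betw (\<lambda>x. if x = 0 then a else if x = 1 then b else c) S5 {a,b,c}"
    using assms by (auto simp: bij_betw_def inj_on_def)
  have "{{a,b},{b,c},{a,c}} = (\<lambda>e. (\<lambda>x. if x = 0 then a else if x = 1 then b else c) ` e) ` E5" by (simp add: insert_commute)
  thus ?thesis by (rule graph_lie_iso[OF sg_reps(5) g1])
qed

lemma classify:
  assumes sg: "simple_graph S E" and c: "card S + card E = 6"
  shows "lie_iso TYPE('k::field) S1 {} S E \<or> lie_iso TYPE('k) S2 E2 S E \<or> lie_iso TYPE('k) S3 E3 S E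
     \<or> lie_iso TYPE('k) S3 E4 S E \<or> lie_iso TYPE('k) S5 E5 S E"
proof -
  have finS: "finite S" using sg unfolding simple_graph_def by blast
  have EP: "E \<subseteq> {{a,b} | a b. a \<in> S \<and> b \<in> S \<and> a \<noteq> b}" using sg unfolding simple_graph_def by blast
  have "{{a,b} | a b. a \<in> S \<and> b \<in> S \<and> a \<noteq> b} \<subseteq> Pow S" by blast
  hence finE: "finite E" using EP finS by (meson finite_Pow_iff finite_subset)
  have edge: "\<exists>a b. e = {a,b} \<and> a \<in> S \<and> b \<in> S \<and> a \<noteq> b" if "e \<in> E" for e using EP that by blast
  consider "card S \<le> 2" | "card S = 3" | "card S = 4" | "card S = 5" | "card S = 6" using c by linarith
  thus ?thesis
  proof cases
    case 1
    have "\<exists>x y. S \<subseteq> {x,y}"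
    proof -
      consider "card S = 0" | "card S = 1" | "card S = 2" using 1 by linarith
      thus ?thesis
      proof cases
        case 1 thus ?thesis using finS by simp
      next
        case 2 thus ?thesis by (metis One_nat_def card_1_singleton_iff insert_absorb2 subset_refl)
      next
        case 3 thus ?thesis by (metis card_2_iff subset_refl)
      qed
    qed
    then obtain x y where xy: "S \<subseteq> {x,y}" by blast
    have "E \<subseteq> {{x,y}}"
    proof
      fix e assume "e \<in> E"
      then obtain a b where "e = {a,b}" "a \<in> S" "b \<in> S" "a \<noteq> b" using edge by blast
      thus "e \<in> {{x,y}}" using xy by auto
    qed
    hence "card E \<le> 1" by (metis card.empty card.insert card_mono empty_iff finite.emptyI finite.insertI One_nat_def)
    thus ?thesis using 1 c by linarith
  next
    case 2
    then obtain x y z where S: "S = {x,y,z}" "x \<noteq> y" "y \<noteq> z" "x \<noteq> z" using card_3_iff by metis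
    have cE: "card E = 3" using 2 c by linarith
    define T where "T = {{x,y},{y,z},{x,z}}"
    have ET: "E \<subseteq> T"
    proof
      fix e assume "e \<in> E"
      then obtain a b where "e = {a,b}" "a \<in> S" "b \<in> S" "a \<noteq> b" using edge by blast
      thus "e \<in> T" using S unfolding T_def by (auto simp: doubleton_eq_iff)
    qed
    have "card T \<le> 3" unfolding T_def using card_length[of "[{x,y},{y,z},{x,z}]"] by simp
    hence "E = T" using card_seteq[OF _ ET] cE unfolding T_def by simp
    hence "lie_iso TYPE('k) S5 E5 S E" using type5[OF S(2) S(4) S(3), where 'k='k] S unfolding T_def by simp
    thus ?thesis by blast
  next
    case 3
    have c4: "card S = 4" using 3 .
    have "card E = 2" using 3 c by linarith
    then obtain e1 e2 where E: "E = {e1,e2}" "e1 \<noteq> e2" using card_2_iff by metis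
    obtain a b where ab: "e1 = {a,b}" "a \<in> S" "b \<in> S" "a \<noteq> b" using edge E by blast
    obtain c d where cd: "e2 = {c,d}" "c \<in> S" "d \<in> S" "c \<noteq> d" using edge E by blast
    consider "a = c" | "a \<noteq> c" "a = d" | "a \<noteq> c" "a \<noteq> d" "b = c" | "a \<noteq> c" "a \<noteq> d" "b \<noteq> c" "b = d"
       | "a \<noteq> c" "a \<noteq> d" "b \<noteq> c" "b \<noteq> d" by blast
    thus ?thesis
    proof cases
      case 1
      hence "b \<noteq> d" using E ab cd by auto
      hence "lie_iso TYPE('k) S3 E3 S {{b,a},{a,d}}" using type3[OF finS c4, of b a d, where 'k='k] ab cd 1 by auto
      moreover have "E = {{b,a},{a,d}}" using E ab cd 1 by (simp add: insert_commute)
      ultimately show ?thesis by simp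
    next
      case 2
      moreover have "b \<noteq> c" using E ab cd 2 by auto
      ultimately have "lie_iso TYPE('k) S3 E3 S {{b,a},{a,c}}" using type3[OF finS c4, of b a c, where 'k='k] ab cd by auto
      moreover have "E = {{b,a},{a,c}}" using E ab cd 2 by (simp add: insert_commute)
      ultimately show ?thesis by simp
    next
      case 3
      hence "lie_iso TYPE('k) S3 E3 S {{a,b},{b,d}}" using type3[OF finS c4, of a b d, where 'k='k] ab cd by auto
      moreover have "E = {{a,b},{b,d}}" using E ab cd 3 by (simp add: insert_commute)
      ultimately show ?thesis by simp
    next
      case 4
      hence "lie_iso TYPE('k) S3 E3 S {{a,b},{b,c}}" using type3[OF finS c4, of a b c, where 'k='k] ab cd E by auto
      moreover have "E = {{a,b},{b,c}}" using E ab cd 4 by (simp add: insert_commute)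
      ultimately show ?thesis by simp
    next
      case 5
      hence "lie_iso TYPE('k) S3 E4 S {{a,b},{c,d}}" using type4[OF finS c4, of a b c d, where 'k='k] ab cd by auto
      thus ?thesis using E ab cd by simp
    qed
  next
    case 4
    have "card E = 1" using 4 c by linarith
    then obtain e where "E = {e}" using card_1_singleton_iff by (metis One_nat_def)
    moreover obtain a b where "e = {a,b}" "a \<in> S" "b \<in> S" "a \<noteq> b" using edge calculation by blast
    ultimately show ?thesis using type2[OF finS 4, where 'k='k] by auto
  next
    case 5
    have "E = {}" using 5 c finE by simp
    thus ?thesis using type1[OF finS 5, where 'k='k] by simp
  qed
qed

lemma P1_P2: "P1 TYPE('k::field) S E \<Longrightarrow> P2 TYPE('k) S E"
  unfolding P1_def P2_def
proof -
  assume h: "\<forall>x\<in>ncarrier S E. \<forall>y\<in>ncarrier S E. nbracket E x (y::('a,'k) nelem) = zn"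
  show "\<exists>z\<in>ncarrier S E. \<forall>x\<in>ncarrier S E. \<forall>y\<in>ncarrier S E. \<exists>c. nbracket E x (y::('a,'k) nelem) = nsmul c z"
  proof (rule bexI[of _ zn], intro ballI)
    fix x y :: "('a,'k) nelem" assume "x \<in> ncarrier S E" "y \<in> ncarrier S E"
    hence "nbracket E x y = nsmul 0 zn" using h nsmul_zero by metis
    thus "\<exists>c. nbracket E x y = nsmul c zn" ..
  qed (rule zn_in)
qed

lemma P2_P3: "P2 TYPE('k::field) S E \<Longrightarrow> P3 TYPE('k) S E"
  unfolding P2_def P3_def
proof -
  assume "\<exists>z\<in>ncarrier S E. \<forall>x\<in>ncarrier S E. \<forall>y\<in>ncarrier S E. \<exists>c. nbracket E x (y::('a,'k) nelem) = nsmul c z"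
  then obtain z :: "('a,'k) nelem" where z: "z \<in> ncarrier S E" "\<forall>x\<in>ncarrier S E. \<forall>y\<in>ncarrier S E. \<exists>c. nbracket E x y = nsmul c z" by blast
  have "nadd (nsmul c z) (nsmul 0 z) = nsmul c z" for c by (simp add: nadd_def nsmul_def)
  thus "\<exists>z1\<in>ncarrier S E. \<exists>z2\<in>ncarrier S E. \<forall>x\<in>ncarrier S E. \<forall>y\<in>ncarrier S E. \<exists>c1 c2. nbracket E x (y::('a,'k) nelem) = nadd (nsmul c1 z1) (nsmul c2 z2)"
    using z by metis
qed

lemma ni12: "\<not> lie_iso TYPE('k::field) S1 {} S2 E2" using P1_tr[OF _ P1_R1] notP1_R2 by blast
lemma ni13: "\<not> lie_iso TYPE('k::field) S1 {} S3 E3" using P1_tr[OF _ P1_R1] notP2_R3 P1_P2 by blast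
lemma ni14: "\<not> lie_iso TYPE('k::field) S1 {} S3 E4" using P1_tr[OF _ P1_R1] notP2_R4 P1_P2 by blast
lemma ni15: "\<not> lie_iso TYPE('k::field) S1 {} S5 E5" using P1_tr[OF _ P1_R1] notP3_R5 P1_P2 P2_P3 by blast
lemma ni23: "\<not> lie_iso TYPE('k::field) S2 E2 S3 E3" using P2_tr[OF _ P2_R2] notP2_R3 by blast
lemma ni24: "\<not> lie_iso TYPE('k::field) S2 E2 S3 E4" using P2_tr[OF _ P2_R2] notP2_R4 by blast
lemma ni25: "\<not> lie_iso TYPE('k::field) S2 E2 S5 E5" using P2_tr[OF _ P2_R2] notP3_R5 P2_P3 by blast
lemma ni34: "\<not> lie_iso TYPE('k::field) S3 E3 S3 E4" using Q_tr[OF _ Q_R3] notQ_R4 by blast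
lemma ni35: "\<not> lie_iso TYPE('k::field) S3 E3 S5 E5" using P3_tr[OF _ P3_R3] notP3_R5 by blast
lemma ni45: "\<not> lie_iso TYPE('k::field) S3 E4 S5 E5" using P3_tr[OF _ P3_R4] notP3_R5 by blast

lemma in6: "(S1,{}) \<in> graphs6" "(S2,E2) \<in> graphs6" "(S3,E3) \<in> graphs6" "(S3,E4) \<in> graphs6" "(S5,E5) \<in> graphs6"
  unfolding graphs6_def using sg_reps by (simp_all add: doubleton_eq_iff)

theorem mainTheorem5:
  assumes "(2::'k::field) \<noteq> 0"
  shows "card (graphs6 // {(g, h). g \<in> graphs6 \<and> h \<in> graphs6 \<and>
            lie_iso TYPE('k) (fst g) (snd g) (fst h) (snd h)}) = 5"
proof -
  define r where "r = {(g, h). g \<in> graphs6 \<and> h \<in> graphs6 \<and> lie_iso TYPE('k) (fst g) (snd g) (fst h) (snd h)}"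
  have eq: "equiv graphs6 r"
  proof (rule equivI)
    show "r \<subseteq> graphs6 \<times> graphs6" unfolding r_def by auto
    show "refl_on graphs6 r" unfolding r_def refl_on_def using lie_iso_refl by auto
    show "sym r" unfolding r_def sym_def using lie_iso_sym by auto
    show "trans r" unfolding r_def trans_def using lie_iso_trans by blast
  qed
  define R1 where "R1 = (S1, {} :: nat set set)"
  define R2 where "R2 = (S2, E2)"
  define R3 where "R3 = (S3, E3)"
  define R4 where "R4 = (S3, E4)"
  define R5 where "R5 = (S5, E5)"
  have Rin: "R1 \<in> graphs6" "R2 \<in> graphs6" "R3 \<in> graphs6" "R4 \<in> graphs6" "R5 \<in> graphs6"
    unfolding R1_def R2_def R3_def R4_def R5_def using in6 by auto
  have cover: "r``{g} \<in> {r``{R1}, r``{R2}, r``{R3}, r``{R4}, r``{R5}}" if g: "g \<in> graphs6" for g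
  proof -
    obtain S E where gSE: "g = (S,E)" by fastforce
    have "simple_graph S E" "card S + card E = 6" using g gSE unfolding graphs6_def by auto
    from classify[OF this, where 'k='k]
    have "(R1,g) \<in> r \<or> (R2,g) \<in> r \<or> (R3,g) \<in> r \<or> (R4,g) \<in> r \<or> (R5,g) \<in> r"
      using Rin g gSE unfolding r_def R1_def R2_def R3_def R4_def R5_def by auto
    thus ?thesis using equiv_class_eq[OF eq, of R1 g] equiv_class_eq[OF eq, of R2 g] equiv_class_eq[OF eq, of R3 g]
      equiv_class_eq[OF eq, of R4 g] equiv_class_eq[OF eq, of R5 g] by (elim disjE) simp_all
  qed
  have Q: "graphs6 // r = {r``{R1}, r``{R2}, r``{R3}, r``{R4}, r``{R5}}"
  proof
    show "graphs6 // r \<subseteq> {r``{R1}, r``{R2}, r``{R3}, r``{R4}, r``{R5}}"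
    proof
      fix X assume "X \<in> graphs6 // r"
      then obtain g where "g \<in> graphs6" "X = r``{g}" by (rule quotientE)
      thus "X \<in> {r``{R1}, r``{R2}, r``{R3}, r``{R4}, r``{R5}}" using cover by simp
    qed
    show "{r``{R1}, r``{R2}, r``{R3}, r``{R4}, r``{R5}} \<subseteq> graphs6 // r"
      by (simp add: quotientI Rin)
  qed
  have d: "r``{X} \<noteq> r``{Y}" if "X \<in> graphs6" "Y \<in> graphs6" "(X,Y) \<notin> r" for X Y
    using eq_equiv_class_iff[OF eq that(1,2)] that(3) by blast
  have n12: "(R1,R2) \<notin> r" unfolding r_def R1_def R2_def using ni12[where 'k='k] by simp
  have n13: "(R1,R3) \<notin> r" unfolding r_def R1_def R3_def using ni13[where 'k='k] by simp
  have n14: "(R1,R4) \<notin> r" unfolding r_def R1_def R4_def using ni14[where 'k='k] by simp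
  have n15: "(R1,R5) \<notin> r" unfolding r_def R1_def R5_def using ni15[where 'k='k] by simp
  have n23: "(R2,R3) \<notin> r" unfolding r_def R2_def R3_def using ni23[where 'k='k] by simp
  have n24: "(R2,R4) \<notin> r" unfolding r_def R2_def R4_def using ni24[where 'k='k] by simp
  have n25: "(R2,R5) \<notin> r" unfolding r_def R2_def R5_def using ni25[where 'k='k] by simp
  have n34: "(R3,R4) \<notin> r" unfolding r_def R3_def R4_def using ni34[where 'k='k] by simp
  have n35: "(R3,R5) \<notin> r" unfolding r_def R3_def R5_def using ni35[where 'k='k] by simp
  have n45: "(R4,R5) \<notin> r" unfolding r_def R4_def R5_def using ni45[where 'k='k] by simp
  note nn = n12 n13 n14 n15 n23 n24 n25 n34 n35 n45
  have dd: "r``{R1} \<noteq> r``{R2}" "r``{R1} \<noteq> r``{R3}" "r``{R1} \<noteq> r``{R4}" "r``{R1} \<noteq> r``{R5}"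
     "r``{R2} \<noteq> r``{R3}" "r``{R2} \<noteq> r``{R4}" "r``{R2} \<noteq> r``{R5}" "r``{R3} \<noteq> r``{R4}"
     "r``{R3} \<noteq> r``{R5}" "r``{R4} \<noteq> r``{R5}"
    using d[OF _ _ nn(1)] d[OF _ _ nn(2)] d[OF _ _ nn(3)] d[OF _ _ nn(4)] d[OF _ _ nn(5)] d[OF _ _ nn(6)] d[OF _ _ nn(7)] d[OF _ _ nn(8)] d[OF _ _ nn(9)] d[OF _ _ nn(10)] Rin by simp_all
  show ?thesis unfolding r_def[symmetric] Q using dd by simp
qed

end
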